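(* Fix finite alphabets $\mathcal{X},\mathcal{Y},\mathcal{Z}$. The map sending a joint distribution $\mathcal{D}_{X,Y,Z}$ on $\mathcal{X}\times\mathcal{Y}\times\mathcal{Z}$ (an element of the probability simplex in $\mathbb{R}^{|\mathcal{X}|\times|\mathcal{Y}|\times|\mathcal{Z}|}$, with the Euclidean topology) to $\operatorname{Red}(X,Y\to Z)\in\mathbb{R}$ is continuous, where $\operatorname{Red}$ is the redundant information defined below.
   Context: For $(X,Y,Z)$ with joint distribution $\mathcal{D}_{X,Y,Z}$ and each $y\in\mathcal{Y}$ with $\Pr(Y=y)>0$, let $(A_y,B_y,C_y)$ be the random triple on $\mathcal{X}\times\mathcal{Y}\times\mathcal{Z}$ with $\Pr(A_y=x,B_y=y',C_y=z)=0$ if $\Pr(Z=z)=0$ and $\Pr(A_y=x,B_y=y',C_y=z)=\Pr(X=x,Y=y',Z=z)\Pr(Z=z\mid Y=y)/\Pr(Z=z)$ otherwise. The unique information is $\operatorname{Un}(X\to Z\mid Y)=\sum_{y:\Pr(Y=y)>0}\Pr(Y=y)\,I(A_y;C_y)$ and the redundant information is $\operatorname{Red}(X,Y\to Z)=I(X;Z)-\operatorname{Un}(X\to Z\mid Y)$, where $I$ is mutual information. *)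

theory Defs
  imports "HOL-Analysis.Analysis"
begin

definition prob_simplex :: "(real ^ ('x::finite \<times> 'y::finite \<times> 'z::finite)) set" where
  "prob_simplex = {p. (\<forall>i. 0 \<le> p $ i) \<and> (\<Sum>i\<in>UNIV. p $ i) = 1}"

definition mutual_info :: "('a::finite \<times> 'c::finite \<Rightarrow> real) \<Rightarrow> real" where
  "mutual_info r =
     (\<Sum>ac\<in>UNIV. if r ac = 0 then 0
        else r ac * log 2 (r ac / ((\<Sum>c'\<in>UNIV. r (fst ac, c')) * (\<Sum>a'\<in>UNIV. r (a', snd ac)))))"

definition PY :: "real ^ ('x::finite \<times> 'y::finite \<times> 'z::finite) \<Rightarrow> 'y \<Rightarrow> real" where
  "PY p y = (\<Sum>x\<in>UNIV. \<Sum>z\<in>UNIV. p $ (x, y, z))"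

definition PZ :: "real ^ ('x::finite \<times> 'y::finite \<times> 'z::finite) \<Rightarrow> 'z \<Rightarrow> real" where
  "PZ p z = (\<Sum>x\<in>UNIV. \<Sum>y\<in>UNIV. p $ (x, y, z))"

definition PYZ :: "real ^ ('x::finite \<times> 'y::finite \<times> 'z::finite) \<Rightarrow> 'y \<Rightarrow> 'z \<Rightarrow> real" where
  "PYZ p y z = (\<Sum>x\<in>UNIV. p $ (x, y, z))"

definition PXZ :: "real ^ ('x::finite \<times> 'y::finite \<times> 'z::finite) \<Rightarrow> 'x \<times> 'z \<Rightarrow> real" where
  "PXZ p xz = (\<Sum>y\<in>UNIV. p $ (fst xz, y, snd xz))"

text \<open>The law of the triple (A_y, B_y, C_y).\<close>
definition tilt :: "real ^ ('x::finite \<times> 'y::finite \<times> 'z::finite) \<Rightarrow> 'y \<Rightarrow> 'x \<Rightarrow> 'y \<Rightarrow> 'z \<Rightarrow> real" where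
  "tilt p y x y' z = (if PZ p z = 0 then 0
      else p $ (x, y', z) * (PYZ p y z / PY p y) / PZ p z)"

definition tilt_AC :: "real ^ ('x::finite \<times> 'y::finite \<times> 'z::finite) \<Rightarrow> 'y \<Rightarrow> 'x \<times> 'z \<Rightarrow> real" where
  "tilt_AC p y xz = (\<Sum>y'\<in>UNIV. tilt p y (fst xz) y' (snd xz))"

definition Un_info :: "real ^ ('x::finite \<times> 'y::finite \<times> 'z::finite) \<Rightarrow> real" where
  "Un_info p = (\<Sum>y\<in>{y. PY p y > 0}. PY p y * mutual_info (tilt_AC p y))"

definition Red_info :: "real ^ ('x::finite \<times> 'y::finite \<times> 'z::finite) \<Rightarrow> real" where
  "Red_info p = mutual_info (PXZ p) - Un_info p"

end

theory Submission
  imports Defs "HOL-Real_Asymp.Real_Asymp"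
begin
definition hh :: "real \<Rightarrow> real" where "hh t = (if t \<le> 0 then 0 else t * log 2 t)"

lemma isCont_hh: "isCont hh t"
proof -
  have lim0: "((\<lambda>x::real. x * log 2 x) \<longlongrightarrow> 0) (at_right 0)"
    unfolding log_def by real_asymp
  consider "t < 0" | "t = 0" | "t > 0" by linarith
  then show ?thesis
  proof cases
    case 1
    have "eventually (\<lambda>x. x \<in> {..<0}) (nhds t)" using 1
      by (intro eventually_nhds_in_open) auto
    then have "eventually (\<lambda>x. hh x = 0) (nhds t)" by eventually_elim (auto simp: hh_def)
    then show ?thesis unfolding isCont_def using 1
      by (simp add: hh_def tendsto_eventually eventually_at_filter eventually_mono)
  next
    case 2
    have l: "(hh \<longlongrightarrow> 0) (at_left 0)"
    proof (rule tendsto_eventually)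
      show "eventually (\<lambda>x. hh x = 0) (at_left (0::real))"
        using eventually_at_left_real[of "-1" "0::real"]
        by (auto simp: hh_def elim!: eventually_mono)
    qed
    have r: "(hh \<longlongrightarrow> 0) (at_right 0)"
    proof (rule Lim_transform_eventually[OF lim0])
      show "eventually (\<lambda>x. x * log 2 x = hh x) (at_right (0::real))"
        using eventually_at_right_less[of "0::real"] by (rule eventually_mono) (simp add: hh_def)
    qed
    show ?thesis using l r 2 unfolding isCont_def by (simp add: hh_def filterlim_split_at_real)
  next
    case 3
    have "eventually (\<lambda>x. x \<in> {0<..}) (nhds t)" using 3
      by (intro eventually_nhds_in_open) auto
    then have ev: "eventually (\<lambda>x. hh x = x * log 2 x) (nhds t)" by eventually_elim (auto simp: hh_def)
    have "isCont (\<lambda>x. x * log 2 x) t" using 3 by (intro continuous_intros) auto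
    moreover have "hh t = t * log 2 t" using 3 by (simp add: hh_def)
    ultimately show ?thesis using ev unfolding isCont_def
      by (smt (verit) Lim_transform_eventually eventually_at_filter eventually_mono)
  qed
qed
lemma hh_bound: assumes "0 \<le> t" "t \<le> 1" shows "\<bar>hh t\<bar> \<le> 1 / ln 2"
proof (cases "t = 0")
  case False
  then have t: "0 < t" using assms by simp
  have "ln (1/t) \<le> 1/t - 1" using t by (intro ln_le_minus_one) auto
  then have a: "- ln t \<le> 1/t - 1" using t by (simp add: ln_div)
  have b: "t * (- ln t) \<le> t * (1/t - 1)" using mult_left_mono[OF a, of t] t by simp
  have "t * (1/t - 1) = 1 - t" using t by (simp add: field_simps)
  then have "- (t * ln t) \<le> 1 - t" using b by simp
  moreover have "ln t \<le> 0" using t assms by simp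
  then have "t * ln t \<le> 0" using t by (simp add: mult_nonneg_nonpos)
  ultimately have "\<bar>t * ln t\<bar> \<le> 1" using t assms by linarith
  then have "\<bar>t * ln t\<bar> / ln 2 \<le> 1 / ln 2" by (intro divide_right_mono) auto
  then show ?thesis using t by (simp add: hh_def log_def abs_divide)
qed (simp add: hh_def)

lemma contA:
  fixes S :: "'a::metric_space set"
  assumes f: "continuous_on S f" and f0: "\<And>p. p\<in>S \<Longrightarrow> 0 \<le> f p"
   and w: "\<And>p. p\<in>S \<Longrightarrow> 0 \<le> w p \<and> w p \<le> 1"
   and wc: "\<And>p. p\<in>S \<Longrightarrow> f p > 0 \<Longrightarrow> continuous (at p within S) w"
  shows "continuous_on S (\<lambda>p. f p * (w p * log 2 (w p)))"
proof -
  have cont: "continuous_on S (\<lambda>p. f p * hh (w p))"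
    unfolding continuous_on_eq_continuous_within
  proof
    fix p assume p: "p \<in> S"
    have fc: "continuous (at p within S) f" using f p by (simp add: continuous_on_eq_continuous_within)
    show "continuous (at p within S) (\<lambda>p. f p * hh (w p))"
    proof (cases "f p > 0")
      case True
      show ?thesis
        by (rule continuous_mult[OF fc continuous_within_compose3[where g=hh, OF isCont_hh wc[OF p True]]])
    next
      case False
      then have fp: "f p = 0" using f0 p by force
      have evS: "eventually (\<lambda>q. q \<in> S) (at p within S)"
        by (simp add: eventually_at_filter)
      have "((\<lambda>q. f q * hh (w q)) \<longlongrightarrow> 0) (at p within S)"
      proof (rule Lim_null_comparison)
        show "eventually (\<lambda>q. norm (f q * hh (w q)) \<le> f q * (1 / ln 2)) (at p within S)"
          using evS
        proof eventually_elim
          case (elim q)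
          have "\<bar>hh (w q)\<bar> \<le> 1 / ln 2" using w[OF elim] by (intro hh_bound) auto
          then have "f q * \<bar>hh (w q)\<bar> \<le> f q * (1 / ln 2)" using f0[OF elim] by (rule mult_left_mono)
          then show ?case using f0[OF elim] by (simp add: abs_mult)
        qed
        have "(f \<longlongrightarrow> 0) (at p within S)" using fc fp unfolding continuous_within by simp
        then show "((\<lambda>q. f q * (1 / ln 2)) \<longlongrightarrow> 0) (at p within S)"
          by (rule tendsto_mult_left_zero)
      qed
      then show ?thesis unfolding continuous_within using fp by simp
    qed
  qed
  have eq: "f p * hh (w p) = f p * (w p * log 2 (w p))" if "p \<in> S" for p
  proof (cases "w p = 0")
    case False then show ?thesis using w[OF that] by (simp add: hh_def)
  qed (simp add: hh_def)
  have "continuous_on S (\<lambda>p. f p * hh (w p)) = continuous_on S (\<lambda>p. f p * (w p * log 2 (w p)))"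
    by (rule continuous_on_cong) (simp_all add: eq)
  then show ?thesis using cont by simp
qed

lemma sum_pair: "(\<Sum>i\<in>(UNIV::('a::finite\<times>'b::finite) set). F i) = (\<Sum>a\<in>UNIV. \<Sum>b\<in>UNIV. F (a,b))"
  by (simp add: sum.cartesian_product UNIV_Times_UNIV[symmetric] del: UNIV_Times_UNIV)

definition J :: "real^('x::finite\<times>'y::finite\<times>'z::finite) \<Rightarrow> 'y \<Rightarrow> 'x\<times>'z \<Rightarrow> real" where
 "J p y xz = PXZ p xz * (PYZ p y (snd xz) / PY p y) / PZ p (snd xz)"

lemma tilt_AC_eq1: "tilt_AC p y (x,z) = J p y (x,z)"
  by (cases "PZ p z = 0")
     (simp_all add: tilt_AC_def tilt_def J_def PXZ_def sum_distrib_right sum_divide_distrib)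

lemma tilt_AC_eq: "tilt_AC p y = J p y"
  by (rule ext) (metis tilt_AC_eq1 surj_pair)

lemma mi_eq:
  fixes r :: "'a::finite \<times> 'c::finite \<Rightarrow> real"
  assumes r: "\<And>ac. 0 \<le> r ac"
  shows "mutual_info r = (\<Sum>ac\<in>UNIV. r ac * log 2 (r ac))
     - (\<Sum>a\<in>UNIV. (\<Sum>c\<in>UNIV. r (a,c)) * log 2 (\<Sum>c\<in>UNIV. r (a,c)))
     - (\<Sum>c\<in>UNIV. (\<Sum>a\<in>UNIV. r (a,c)) * log 2 (\<Sum>a\<in>UNIV. r (a,c)))"
proof -
  define ra where "ra a = (\<Sum>c\<in>UNIV. r (a,c))" for a
  define rc where "rc c = (\<Sum>a\<in>UNIV. r (a,c))" for c
  have trm: "(if r ac = 0 then 0 else r ac * log 2 (r ac / ((\<Sum>c'\<in>UNIV. r (fst ac, c')) * (\<Sum>a'\<in>UNIV. r (a', snd ac)))))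
     = r ac * log 2 (r ac) - r ac * log 2 (ra (fst ac)) - r ac * log 2 (rc (snd ac))" for ac
  proof (cases "r ac = 0")
    case False
    obtain a c where ac: "ac = (a,c)" by (cases ac)
    have pos: "0 < r (a,c)" using r[of ac] False ac by simp
    have "r (a,c) \<le> ra a" unfolding ra_def
      using member_le_sum[of c UNIV "\<lambda>c. r (a,c)"] r by auto
    hence pa: "0 < ra a" using pos by simp
    have "r (a,c) \<le> rc c" unfolding rc_def
      using member_le_sum[of a UNIV "\<lambda>a. r (a,c)"] r by auto
    hence pc: "0 < rc c" using pos by simp
    have "log 2 (r (a,c) / (ra a * rc c)) = log 2 (r (a,c)) - log 2 (ra a) - log 2 (rc c)"
      using pos pa pc by (simp add: log_divide log_mult)
    then show ?thesis using pos
      by (simp add: ac ra_def[symmetric] rc_def[symmetric] right_diff_distrib)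
  qed simp
  have s1: "(\<Sum>ac\<in>UNIV. r ac * log 2 (ra (fst ac))) = (\<Sum>a\<in>UNIV. ra a * log 2 (ra a))"
    by (simp add: sum_pair ra_def sum_distrib_right)
  have s2: "(\<Sum>ac\<in>UNIV. r ac * log 2 (rc (snd ac))) = (\<Sum>c\<in>UNIV. rc c * log 2 (rc c))"
    by (simp add: sum_pair rc_def sum_distrib_right sum.swap[of _ "UNIV::'a set"])
  have "mutual_info r = (\<Sum>ac\<in>UNIV. r ac * log 2 (r ac) - r ac * log 2 (ra (fst ac)) - r ac * log 2 (rc (snd ac)))"
    unfolding mutual_info_def using trm by simp
  also have "\<dots> = (\<Sum>ac\<in>UNIV. r ac * log 2 (r ac)) - (\<Sum>a\<in>UNIV. ra a * log 2 (ra a)) - (\<Sum>c\<in>UNIV. rc c * log 2 (rc c))"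
    by (simp add: sum_subtractf s1 s2)
  finally show ?thesis by (simp add: ra_def rc_def)
qed

context
  fixes p :: "real^('x::finite\<times>'y::finite\<times>'z::finite)"
  assumes p: "p \<in> prob_simplex"
begin

lemma nn: "0 \<le> p $ i" using p unfolding prob_simplex_def by blast

lemma tot: "(\<Sum>x\<in>UNIV. \<Sum>y\<in>UNIV. \<Sum>z\<in>UNIV. p $ (x,y,z)) = 1"
  using p by (simp add: prob_simplex_def sum_pair)

lemma PY_nn: "0 \<le> PY p y" unfolding PY_def by (intro sum_nonneg) (simp add: nn)
lemma PZ_nn: "0 \<le> PZ p z" unfolding PZ_def by (intro sum_nonneg) (simp add: nn)
lemma PYZ_nn: "0 \<le> PYZ p y z" unfolding PYZ_def by (intro sum_nonneg) (simp add: nn)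
lemma PXZ_nn: "0 \<le> PXZ p xz" unfolding PXZ_def by (intro sum_nonneg) (simp add: nn)

lemma sumPZ: "(\<Sum>z\<in>UNIV. PZ p z) = 1"
proof -
  have "(\<Sum>z\<in>UNIV. PZ p z) = (\<Sum>x\<in>UNIV. \<Sum>z\<in>UNIV. \<Sum>y\<in>UNIV. p $ (x,y,z))"
    unfolding PZ_def by (rule sum.swap)
  also have "\<dots> = (\<Sum>x\<in>UNIV. \<Sum>y\<in>UNIV. \<Sum>z\<in>UNIV. p $ (x,y,z))"
    by (rule sum.cong[OF refl], rule sum.swap)
  finally show ?thesis using tot by simp
qed

lemma sumPY: "(\<Sum>y\<in>UNIV. PY p y) = 1"
proof -
  have "(\<Sum>y\<in>UNIV. PY p y) = (\<Sum>x\<in>UNIV. \<Sum>y\<in>UNIV. \<Sum>z\<in>UNIV. p $ (x,y,z))"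
    unfolding PY_def by (rule sum.swap)
  then show ?thesis using tot by simp
qed

lemma sumPX: "(\<Sum>x\<in>UNIV. \<Sum>z\<in>UNIV. PXZ p (x,z)) = 1"
proof -
  have "(\<Sum>x\<in>UNIV. \<Sum>z\<in>UNIV. PXZ p (x,z)) = (\<Sum>x\<in>UNIV. \<Sum>y\<in>UNIV. \<Sum>z\<in>UNIV. p $ (x,y,z))"
    unfolding PXZ_def by (simp, rule sum.cong[OF refl], rule sum.swap)
  then show ?thesis using tot by simp
qed

lemma PZ_eq: "PZ p z = (\<Sum>x\<in>UNIV. PXZ p (x,z))" by (simp add: PZ_def PXZ_def)
lemma PY_eq: "PY p y = (\<Sum>z\<in>UNIV. PYZ p y z)" unfolding PY_def PYZ_def by (rule sum.swap)
lemma PZ_eq2: "PZ p z = (\<Sum>y\<in>UNIV. PYZ p y z)" unfolding PZ_def PYZ_def by (rule sum.swap)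

lemma PZ_le: "PZ p z \<le> 1"
  using member_le_sum[of z UNIV "PZ p"] PZ_nn sumPZ by auto
lemma PY_le: "PY p y \<le> 1"
  using member_le_sum[of y UNIV "PY p"] PY_nn sumPY by auto
lemma PX_le: "(\<Sum>z\<in>UNIV. PXZ p (x,z)) \<le> 1"
  using member_le_sum[of x UNIV "\<lambda>x. \<Sum>z\<in>UNIV. PXZ p (x,z)"] sumPX PXZ_nn
  by (auto intro: sum_nonneg)
lemma PXZ_le: "PXZ p (x,z) \<le> PZ p z"
  unfolding PZ_eq using member_le_sum[of x UNIV "\<lambda>x. PXZ p (x,z)"] PXZ_nn by auto
lemma PYZ_le: "PYZ p y z \<le> PY p y"
  unfolding PY_eq using member_le_sum[of z UNIV "\<lambda>z. PYZ p y z"] PYZ_nn by auto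
lemma PYZ_le2: "PYZ p y z \<le> PZ p z"
  unfolding PZ_eq2 using member_le_sum[of y UNIV "\<lambda>y. PYZ p y z"] PYZ_nn by auto

lemma frac_le1: "0 \<le> (a::real) \<Longrightarrow> a \<le> b \<Longrightarrow> a / b \<le> 1"
  by (cases "b = 0") (auto simp: divide_le_eq_1)

lemma J_nn: "0 \<le> J p y xz"
  unfolding J_def by (intro divide_nonneg_nonneg mult_nonneg_nonneg PXZ_nn PYZ_nn PY_nn PZ_nn)

lemma J_le: "J p y (x,z) \<le> PYZ p y z / PY p y"
proof -
  have "J p y (x,z) = (PYZ p y z / PY p y) * (PXZ p (x,z) / PZ p z)" by (simp add: J_def)
  also have "\<dots> \<le> (PYZ p y z / PY p y) * 1"
    by (intro mult_left_mono frac_le1 PXZ_nn PXZ_le divide_nonneg_nonneg PYZ_nn PY_nn)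
  finally show ?thesis by simp
qed

lemma J_le_b: "J p y (x,z) \<le> PXZ p (x,z) / PY p y"
proof -
  have "J p y (x,z) = (PXZ p (x,z) / PY p y) * (PYZ p y z / PZ p z)" by (simp add: J_def)
  also have "\<dots> \<le> (PXZ p (x,z) / PY p y) * 1"
    by (intro mult_left_mono frac_le1 PYZ_nn PYZ_le2 divide_nonneg_nonneg PXZ_nn PY_nn)
  finally show ?thesis by simp
qed

lemma q_le: "PYZ p y z / PY p y \<le> 1" by (intro frac_le1 PYZ_nn PYZ_le)

lemma J_le1: "J p y (x,z) \<le> 1" using J_le q_le order_trans by blast

lemma sumJ_x: "(\<Sum>x\<in>UNIV. J p y (x,z)) = PYZ p y z / PY p y"
proof (cases "PZ p z = 0")
  case True
  then have "PYZ p y z = 0" using PYZ_le2[of y z] PYZ_nn[of y z] by simp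
  then show ?thesis by (simp add: J_def)
next
  case False
  have "(\<Sum>x\<in>UNIV. J p y (x,z)) = (\<Sum>x\<in>UNIV. PXZ p (x,z)) * (PYZ p y z / PY p y) / PZ p z"
    by (simp add: J_def sum_distrib_right sum_divide_distrib)
  then show ?thesis using False by (simp add: PZ_eq[symmetric])
qed

lemma sumJ_z: "(\<Sum>z\<in>UNIV. J p y (x,z)) \<le> 1"
proof -
  have "(\<Sum>z\<in>UNIV. J p y (x,z)) \<le> (\<Sum>z\<in>UNIV. PYZ p y z / PY p y)"
    by (intro sum_mono J_le)
  also have "\<dots> = PY p y / PY p y" unfolding sum_divide_distrib[symmetric] PY_eq[symmetric] ..
  also have "\<dots> \<le> 1" by simp
  finally show ?thesis .
qed

end

lemma contB:
  fixes S :: "'a::metric_space set"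
  assumes "continuous_on S w" "\<And>p. p\<in>S \<Longrightarrow> 0 \<le> w p \<and> w p \<le> 1"
  shows "continuous_on S (\<lambda>p. w p * log 2 (w p))"
proof -
  have "continuous_on S (\<lambda>p. 1 * (w p * log 2 (w p)))"
    using assms by (intro contA) (auto simp: continuous_on_eq_continuous_within)
  then show ?thesis by simp
qed

lemma cPY: "continuous (at q within S) (\<lambda>p::real^('x::finite\<times>'y::finite\<times>'z::finite). PY p y)"
  unfolding PY_def by (intro continuous_intros)
lemma cPZ: "continuous (at q within S) (\<lambda>p::real^('x::finite\<times>'y::finite\<times>'z::finite). PZ p z)"
  unfolding PZ_def by (intro continuous_intros)
lemma cPYZ: "continuous (at q within S) (\<lambda>p::real^('x::finite\<times>'y::finite\<times>'z::finite). PYZ p y z)"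
  unfolding PYZ_def by (intro continuous_intros)
lemma cPXZ: "continuous (at q within S) (\<lambda>p::real^('x::finite\<times>'y::finite\<times>'z::finite). PXZ p xz)"
  unfolding PXZ_def by (intro continuous_intros)
lemma conPY: "continuous_on S (\<lambda>p::real^('x::finite\<times>'y::finite\<times>'z::finite). PY p y)"
  unfolding PY_def by (intro continuous_intros)
lemma conPZ: "continuous_on S (\<lambda>p::real^('x::finite\<times>'y::finite\<times>'z::finite). PZ p z)"
  unfolding PZ_def by (intro continuous_intros)
lemma conPXZ: "continuous_on S (\<lambda>p::real^('x::finite\<times>'y::finite\<times>'z::finite). PXZ p xz)"
  unfolding PXZ_def by (intro continuous_intros)

lemma Jcont:
  fixes p0 :: "real^('x::finite\<times>'y::finite\<times>'z::finite)"
  assumes p0: "p0 \<in> prob_simplex" and py: "PY p0 y > 0"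
  shows "continuous (at p0 within prob_simplex) (\<lambda>p. J p y (x,z))"
proof -
  let ?F = "at p0 within (prob_simplex :: (real^('x\<times>'y\<times>'z)) set)"
  have tY: "((\<lambda>p. PY p y) \<longlongrightarrow> PY p0 y) ?F" using cPY[of p0 prob_simplex y] unfolding continuous_within .
  have tZ: "((\<lambda>p. PZ p z) \<longlongrightarrow> PZ p0 z) ?F" using cPZ[of p0 prob_simplex z] unfolding continuous_within .
  have tYZ: "((\<lambda>p. PYZ p y z) \<longlongrightarrow> PYZ p0 y z) ?F" using cPYZ[of p0 prob_simplex y z] unfolding continuous_within .
  have tXZ: "((\<lambda>p. PXZ p (x,z)) \<longlongrightarrow> PXZ p0 (x,z)) ?F" using cPXZ[of p0 prob_simplex "(x,z)"] unfolding continuous_within .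
  show ?thesis unfolding continuous_within
  proof (cases "PZ p0 z = 0")
    case False
    have "((\<lambda>p. PXZ p (x,z) * (PYZ p y z / PY p y) / PZ p z) \<longlongrightarrow>
           PXZ p0 (x,z) * (PYZ p0 y z / PY p0 y) / PZ p0 z) ?F"
      by (rule tendsto_divide[OF tendsto_mult[OF tXZ tendsto_divide[OF tYZ tY]] tZ])
         (use py False in auto)
    then show "((\<lambda>p. J p y (x,z)) \<longlongrightarrow> J p0 y (x,z)) ?F" by (simp add: J_def)
  next
    case True
    have x0: "PXZ p0 (x,z) = 0" using PXZ_le[OF p0, of x z] PXZ_nn[OF p0, of "(x,z)"] True by simp
    have j0: "J p0 y (x,z) = 0" using True by (simp add: J_def)
    have evS: "eventually (\<lambda>q. q \<in> prob_simplex) ?F" by (simp add: eventually_at_filter)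
    have up: "((\<lambda>p. PXZ p (x,z) / PY p y) \<longlongrightarrow> 0) ?F"
      using tendsto_divide[OF tXZ tY] py x0 by simp
    have "((\<lambda>p. J p y (x,z)) \<longlongrightarrow> 0) ?F"
    proof (rule tendsto_sandwich[OF _ _ tendsto_const up])
      show "eventually (\<lambda>p. 0 \<le> J p y (x,z)) ?F" using evS by eventually_elim (rule J_nn)
      show "eventually (\<lambda>p. J p y (x,z) \<le> PXZ p (x,z) / PY p y) ?F" using evS by eventually_elim (rule J_le_b)
    qed
    then show "((\<lambda>p. J p y (x,z)) \<longlongrightarrow> J p0 y (x,z)) ?F" using j0 by simp
  qed
qed

definition E :: "real^('x::finite\<times>'y::finite\<times>'z::finite) \<Rightarrow> real" where
 "E p = (\<Sum>ac\<in>UNIV. PXZ p ac * log 2 (PXZ p ac))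
 - (\<Sum>a\<in>UNIV. (\<Sum>c\<in>UNIV. PXZ p (a,c)) * log 2 (\<Sum>c\<in>UNIV. PXZ p (a,c)))
 - (\<Sum>c\<in>UNIV. (\<Sum>a\<in>UNIV. PXZ p (a,c)) * log 2 (\<Sum>a\<in>UNIV. PXZ p (a,c)))
 - (\<Sum>y\<in>UNIV. (\<Sum>ac\<in>UNIV. PY p y * (J p y ac * log 2 (J p y ac)))
        - (\<Sum>a\<in>UNIV. PY p y * ((\<Sum>c\<in>UNIV. J p y (a,c)) * log 2 (\<Sum>c\<in>UNIV. J p y (a,c))))
        - (\<Sum>c\<in>UNIV. PY p y * ((\<Sum>a\<in>UNIV. J p y (a,c)) * log 2 (\<Sum>a\<in>UNIV. J p y (a,c)))))"

lemma Red_E: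
  assumes p: "p \<in> prob_simplex"
  shows "Red_info p = E p"
proof -
  have un: "Un_info p = (\<Sum>y\<in>UNIV. PY p y * mutual_info (J p y))"
    unfolding Un_info_def tilt_AC_eq
  proof (rule sum.mono_neutral_left)
    show "\<forall>i\<in>UNIV - {y. 0 < PY p y}. PY p i * mutual_info (J p i) = 0"
      using PY_nn[OF p] by (auto simp: order.order_iff_strict)
  qed auto
  have jn: "\<And>y ac. 0 \<le> J p y ac" using J_nn[OF p] by blast
  show ?thesis
    unfolding Red_info_def un E_def mi_eq[OF PXZ_nn[OF p]] mi_eq[OF jn]
    by (simp add: sum_distrib_left right_diff_distrib)
qed

theorem lemma9:
  shows "continuous_on (prob_simplex :: (real ^ ('x::finite \<times> 'y::finite \<times> 'z::finite)) set) Red_info"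
proof -
  let ?S = "prob_simplex :: (real ^ ('x::finite \<times> 'y::finite \<times> 'z::finite)) set"
  have c1: "continuous_on ?S (\<lambda>p. PXZ p ac * log 2 (PXZ p ac))" for ac
  proof -
    obtain a c where ac: "ac = (a,c)" by (cases ac)
    show ?thesis unfolding ac
      by (rule contB[OF conPXZ]) (meson PXZ_nn PXZ_le PZ_le order_trans)
  qed
  have c2: "continuous_on ?S (\<lambda>p. (\<Sum>c\<in>UNIV. PXZ p (a,c)) * log 2 (\<Sum>c\<in>UNIV. PXZ p (a,c)))" for a
    by (rule contB[OF continuous_on_sum[OF conPXZ]]) (auto intro!: sum_nonneg PXZ_nn PX_le)
  have c3: "continuous_on ?S (\<lambda>p. (\<Sum>a\<in>UNIV. PXZ p (a,c)) * log 2 (\<Sum>a\<in>UNIV. PXZ p (a,c)))" for c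
    by (rule contB[OF continuous_on_sum[OF conPXZ]]) (metis PZ_eq PZ_nn PZ_le)
  have c4: "continuous_on ?S (\<lambda>p. PY p y * (J p y ac * log 2 (J p y ac)))" for y ac
  proof -
    obtain a c where ac: "ac = (a,c)" by (cases ac)
    show ?thesis unfolding ac
      by (rule contA[OF conPY]) (auto simp: PY_nn J_nn J_le1 Jcont)
  qed
  have c5: "continuous_on ?S (\<lambda>p. PY p y * ((\<Sum>c\<in>UNIV. J p y (a,c)) * log 2 (\<Sum>c\<in>UNIV. J p y (a,c))))" for y a
    by (rule contA[OF conPY]) (auto simp: PY_nn J_nn sumJ_z sum_nonneg Jcont intro!: continuous_sum)
  have c6: "continuous_on ?S (\<lambda>p. PY p y * ((\<Sum>a\<in>UNIV. J p y (a,c)) * log 2 (\<Sum>a\<in>UNIV. J p y (a,c))))" for y c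
    by (rule contA[OF conPY]) (auto simp: PY_nn J_nn sumJ_x q_le PYZ_nn sum_nonneg Jcont intro!: continuous_sum)
  have "continuous_on ?S E"
    unfolding E_def
    by (intro continuous_on_diff continuous_on_sum c1 c2 c3 c4 c5 c6)
  moreover have "\<And>p. p \<in> ?S \<Longrightarrow> E p = Red_info p" using Red_E by metis
  ultimately show ?thesis using continuous_on_cong[of ?S ?S E Red_info] by blast
qed
end
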